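(* Let $K\subset M^{m\times n}$ be a three-dimensional subspace without Rank-$1$ connections, with $K=P_K(\mathbb{R}^3)$ where $P_K(z)=(a_{ij}\cdot z)_{ij}$, $a_{ij}\in\mathbb{R}^3$, is a linear isomorphism onto $K$. If $\dim\mathrm{Span}\{a_{i_0l}:l=1,\dots,n\}=3$ for some $i_0$, or $\dim\mathrm{Span}\{a_{lj_0}:l=1,\dots,m\}=3$ for some $j_0$, then there exists $\beta\in\mathbb{R}^{q_0}\setminus\{0\}$ with $\sum_{k=1}^{q_0}\beta_kM_k(X)\ge0$ for all $X\in K$ and $\sum_k\beta_kM_k\not\equiv0$ on $K$, where $M_1,\dots,M_{q_0}$ are all the $2\times2$ minors of $m\times n$ matrices.
   Context: A set has Rank-$1$ connections if it contains $A\ne B$ with $\mathrm{Rank}(A-B)=1$. *)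

theory Defs
  imports "HOL-Analysis.Analysis"
begin

text \<open>Real m x n matrices are rendered as real^'n^'m (m rows indexed by 'm, n columns by 'n).
  The index types carry a linear order so that the 2x2 minors can be enumerated
  by pairs i1 < i2 of rows and j1 < j2 of columns.\<close>

definition has_rank1_connections :: "(real^'n^'m) set \<Rightarrow> bool" where
  "has_rank1_connections S \<longleftrightarrow> (\<exists>A\<in>S. \<exists>B\<in>S. A \<noteq> B \<and> rank (A - B) = 1)"

definition PK :: "('m \<Rightarrow> 'n \<Rightarrow> real^3) \<Rightarrow> real^3 \<Rightarrow> real^'n^'m" where
  "PK a z = (\<chi> i j. a i j \<bullet> z)"

definition minor_idx :: "('m::linorder \<times> 'm \<times> 'n::linorder \<times> 'n) set" where
  "minor_idx = {(i1, i2, j1, j2). i1 < i2 \<and> j1 < j2}"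

definition minor2 :: "('m \<times> 'm \<times> 'n \<times> 'n) \<Rightarrow> real^'n^'m \<Rightarrow> real" where
  "minor2 k X = (case k of (i1, i2, j1, j2) \<Rightarrow>
      X$i1$j1 * X$i2$j2 - X$i1$j2 * X$i2$j1)"

end

theory Submission
  imports Defs
begin


lemma quad_contra:
  fixes c d t :: real
  assumes "c > 0" "\<forall>t>0. 0 \<le> - 2 * t * c + t^2 * d"
  shows False
proof -
  define t where "t = c / (\<bar>d\<bar> + 1)"
  have t: "t > 0" using assms(1) by (simp add: t_def)
  have "0 \<le> - 2 * t * c + t^2 * d" using assms(2) t by blast
  hence "0 \<le> - 2 * c + t * d" using t by (simp add: power2_eq_square)
  moreover have "t * d \<le> t * \<bar>d\<bar>" using t by (simp add: mult_left_mono)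
  moreover have "t * \<bar>d\<bar> < c" using assms(1) by (simp add: t_def field_simps)
  ultimately show False using assms(1) by linarith
qed

lemma eig1:
  fixes S :: "real^'k^'k" and T :: "real^'k \<Rightarrow> real^'k"
  assumes symS: "\<And>x y. x \<bullet> (S *v y) = y \<bullet> (S *v x)"
    and pd: "\<And>x. x \<noteq> 0 \<Longrightarrow> x \<bullet> (S *v x) > 0"
    and lin: "linear T"
    and sa: "\<And>x y. T x \<bullet> (S *v y) = x \<bullet> (S *v T y)"
    and W: "subspace W" and w: "w \<in> W" "w \<noteq> 0"
    and inv: "\<And>x. x \<in> W \<Longrightarrow> T x \<in> W"
  shows "\<exists>x\<in>W. x \<noteq> 0 \<and> (\<exists>l. T x = l *\<^sub>R x)"
proof -
  define B where "B x y = x \<bullet> (S *v y)" for x y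
  have Bl: "B (x + y) z = B x z + B y z" "B (c *\<^sub>R x) z = c * B x z"
       "B z (x + y) = B z x + B z y" "B z (c *\<^sub>R x) = c * B z x"
       "B (x - y) z = B x z - B y z" "B z (x - y) = B z x - B z y" for x y z c
    by (auto simp: B_def inner_add_left inner_diff_left matrix_vector_right_distrib
          matrix_vector_mult_diff_distrib matrix_vector_mult_scaleR inner_add_right inner_diff_right)
  define C where "C = W \<inter> sphere 0 1"
  have cC: "compact C" unfolding C_def
    using compact_Int_closed[OF compact_sphere closed_subspace[OF W], of 0 1] by (simp add: Int_commute)
  have "w /\<^sub>R norm w \<in> C" using w W unfolding C_def by (simp add: subspace_scale)
  hence neC: "C \<noteq> {}" by blast
  define f where "f y = B (T y) y / B y y" for y
  have contT: "continuous_on C T" using lin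
    by (simp add: linear_continuous_on linear_conv_bounded_linear)
  have c1: "continuous_on C (\<lambda>y. S *v y)"
    by (intro linear_continuous_on matrix_vector_mul_bounded_linear)
  have c2: "continuous_on C (\<lambda>y. S *v T y)"
    using continuous_on_compose2[OF linear_continuous_on[OF matrix_vector_mul_bounded_linear[of S]] contT, of UNIV]
    by auto
  have nz: "\<And>y. y \<in> C \<Longrightarrow> y \<bullet> (S *v y) \<noteq> 0"
    using pd unfolding C_def by (metis IntD2 less_irrefl mem_sphere_0 norm_zero zero_neq_one)
  have contf: "continuous_on C f" unfolding f_def B_def
    by (intro continuous_on_divide continuous_on_inner c1 c2 contT continuous_on_id) (use nz in blast)
  obtain x where x: "x \<in> C" and xmax: "\<And>y. y \<in> C \<Longrightarrow> f y \<le> f x"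
    using continuous_attains_sup[OF cC neC contf] by blast
  have xW: "x \<in> W" and x0: "x \<noteq> 0" using x unfolding C_def by auto
  define l where "l = f x"
  have Bxx: "B x x > 0" using pd x0 by (simp add: B_def)
  have q: "l * B y y - B (T y) y \<ge> 0" if "y \<in> W" for y
  proof (cases "y = 0")
    case True thus ?thesis using lin by (simp add: B_def linear_0)
  next
    case False
    define u where "u = y /\<^sub>R norm y"
    have "u \<in> C" using that False W unfolding C_def u_def by (simp add: subspace_scale)
    hence fu: "f u \<le> l" using xmax l_def by blast
 have Tu: "T u = (1 / norm y) *\<^sub>R T y" unfolding u_def using lin
      by (simp add: linear_scale divide_inverse_commute)
    have "f u = ((1 / norm y) * (1 / norm y) * B (T y) y) / ((1 / norm y) * (1 / norm y) * B y y)"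
      unfolding f_def Tu unfolding u_def by (simp add: Bl divide_inverse_commute)
    also have "\<dots> = f y" unfolding f_def using False by (simp only: mult_divide_mult_cancel_left_if) simp
    finally have "f y \<le> l" using fu by simp
    moreover have "B y y > 0" using pd False by (simp add: B_def)
    ultimately show ?thesis unfolding f_def by (simp add: divide_le_eq)
  qed
  have qx: "l * B x x - B (T x) x = 0" unfolding l_def f_def using Bxx by simp
  define r where "r = l *\<^sub>R x - T x"
  have rW: "r \<in> W" unfolding r_def using W xW inv by (simp add: subspace_diff subspace_scale)
  have "r = 0"
  proof (rule ccontr)
    assume r0: "r \<noteq> 0"
    have Brr: "B r r > 0" using pd r0 by (simp add: B_def)
    have "\<forall>t>0. 0 \<le> - 2 * t * B r r + t^2 * (l * B r r - B (T r) r)"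
    proof (intro allI impI)
      fix t :: real assume "t > 0"
      have "x - t *\<^sub>R r \<in> W" using W xW rW by (simp add: subspace_diff subspace_scale)
      hence "0 \<le> l * B (x - t *\<^sub>R r) (x - t *\<^sub>R r) - B (T (x - t *\<^sub>R r)) (x - t *\<^sub>R r)"
        using q by blast
      also have "T (x - t *\<^sub>R r) = T x - t *\<^sub>R T r" using lin by (simp add: linear_diff linear_scale)
      also have "l * B (x - t *\<^sub>R r) (x - t *\<^sub>R r) - B (T x - t *\<^sub>R T r) (x - t *\<^sub>R r)
          = (l * B x x - B (T x) x) - t * (l * B x r + l * B r x - B (T x) r - B (T r) x)
            + t^2 * (l * B r r - B (T r) r)"
        by (simp add: Bl algebra_simps power2_eq_square)
      also have "l * B x r + l * B r x - B (T x) r - B (T r) x = 2 * B r r"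
      proof -
        have "B r x = B x r" using symS by (simp add: B_def)
        moreover have "B (T r) x = B (T x) r" using sa symS unfolding B_def by metis
        moreover have "B r r = l * B x r - B (T x) r" by (subst (1) r_def) (simp only: Bl)
        ultimately show ?thesis by simp
      qed
      finally show "0 \<le> - 2 * t * B r r + t^2 * (l * B r r - B (T r) r)" using qx by simp
    qed
    thus False using quad_contra Brr by blast
  qed
  thus ?thesis using xW x0 unfolding r_def by (metis eq_iff_diff_eq_0)
qed

lemma eigF:
  fixes S :: "real^'k^'k" and F :: "(real^'k \<Rightarrow> real^'k) set"
  assumes symS: "\<And>x y. x \<bullet> (S *v y) = y \<bullet> (S *v x)"
    and pd: "\<And>x. x \<noteq> 0 \<Longrightarrow> x \<bullet> (S *v x) > 0"
    and fin: "finite F"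
    and lin: "\<And>T. T \<in> F \<Longrightarrow> linear T"
    and sa: "\<And>T x y. T \<in> F \<Longrightarrow> T x \<bullet> (S *v y) = x \<bullet> (S *v T y)"
    and comm: "\<And>T T' x. T \<in> F \<Longrightarrow> T' \<in> F \<Longrightarrow> T (T' x) = T' (T x)"
  shows "subspace W \<Longrightarrow> w \<in> W \<Longrightarrow> w \<noteq> 0 \<Longrightarrow> (\<And>T x. T \<in> F \<Longrightarrow> x \<in> W \<Longrightarrow> T x \<in> W)
     \<Longrightarrow> \<exists>y\<in>W. y \<noteq> 0 \<and> (\<forall>T\<in>F. \<exists>c. T y = c *\<^sub>R y)"
  using fin lin sa comm
proof (induction F arbitrary: W w rule: finite_induct)
  case empty
  then show ?case by blast
next
  case (insert T F)
  obtain x l where x: "x \<in> W" "x \<noteq> 0" "T x = l *\<^sub>R x"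
    using eig1[OF symS pd insert.prems(5)[of T] insert.prems(6)[of T] insert.prems(1,2,3)] insert.prems(4)
    by blast
  define E where "E = {y \<in> W. T y = l *\<^sub>R y}"
  have linT: "linear T" using insert.prems(5) by blast
  have sE: "subspace E" unfolding E_def subspace_def
    using insert.prems(1) linT
    by (auto simp: subspace_add subspace_scale subspace_0 linear_0 linear_add linear_scale algebra_simps)
  have "x \<in> E" using x unfolding E_def by blast
  have invE: "T' y \<in> E" if "T' \<in> F" "y \<in> E" for T' y
  proof -
    have "T' y \<in> W" using insert.prems(4) that unfolding E_def by blast
    moreover have "T (T' y) = l *\<^sub>R T' y"
      using insert.prems(7)[of T T' y] that insert.prems(5)[of T'] unfolding E_def
      by (auto simp: linear_scale)
    ultimately show ?thesis unfolding E_def by blast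
  qed
  have "\<exists>y\<in>E. y \<noteq> 0 \<and> (\<forall>T\<in>F. \<exists>c. T y = c *\<^sub>R y)"
    apply (rule insert.IH[OF sE \<open>x \<in> E\<close> x(2)])
    using invE insert.prems(5,6,7) by auto
  then obtain y where y: "y \<in> E" "y \<noteq> 0" "\<forall>T\<in>F. \<exists>c. T y = c *\<^sub>R y" by blast
  thus ?case unfolding E_def by blast
qed



lemma bil_sum:
  fixes S :: "real^'k^'k" and p q :: "'c::finite \<Rightarrow> real^'k"
  shows "(\<Sum>l\<in>UNIV. c$l *\<^sub>R p l) \<bullet> (S *v (\<Sum>l'\<in>UNIV. e$l' *\<^sub>R q l'))
       = (\<Sum>l\<in>UNIV. \<Sum>l'\<in>UNIV. c$l * e$l' * (p l \<bullet> (S *v q l')))"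
proof -
  have "S *v (\<Sum>l'\<in>UNIV. e$l' *\<^sub>R q l') = (\<Sum>l'\<in>UNIV. e$l' *\<^sub>R (S *v q l'))"
    by (simp add: matrix_vector_mult_linear_continuous_at linear_sum[OF matrix_vector_mul_linear] matrix_vector_mult_scaleR)
  thus ?thesis
    apply (simp add: inner_sum_left inner_sum_right sum_distrib_left mult.assoc)
    apply (subst sum.swap)
    apply (simp add: mult.left_commute)
    done
qed

lemma sum_axis: "(\<Sum>l'\<in>UNIV. (axis l (1::real))$l' *\<^sub>R v l') = (v l :: real^'k)"
proof -
  have "(axis l (1::real))$l' *\<^sub>R v l' = (if l' = l then v l else 0)" for l'
    by (auto simp: axis_def)
  thus ?thesis by simp
qed

lemma lin_comb: "linear (\<lambda>c::real^'c::finite. \<Sum>l\<in>UNIV. c$l *\<^sub>R (v l :: real^'k))"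
  by (rule linearI) (auto simp: sum.distrib scaleR_add_left scaleR_sum_right)

lemma perp0:
  fixes u :: "'c \<Rightarrow> real^'k"
  assumes "span (range u) = UNIV" "\<And>j. u j \<bullet> w = 0"
  shows "w = 0"
proof -
  have "orthogonal w w"
    by (rule orthogonal_to_span[of w "range u"]) (use assms in \<open>auto simp: orthogonal_def inner_commute\<close>)
  thus ?thesis by (simp add: orthogonal_def)
qed

lemma core:
  fixes S :: "real^3^3" and a :: "'r::finite \<Rightarrow> 'c::finite \<Rightarrow> real^3"
  assumes symS: "\<And>x y. x \<bullet> (S *v y) = y \<bullet> (S *v x)"
    and pd: "\<And>x. x \<noteq> 0 \<Longrightarrow> x \<bullet> (S *v x) > 0"
    and H: "\<And>i i' j l. a i j \<bullet> (S *v a i' l) = a i l \<bullet> (S *v a i' j)"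
    and sp: "span (range (a i0)) = UNIV"
  shows "\<exists>z. z \<noteq> 0 \<and> (\<forall>i. \<exists>t. \<forall>l. a i l \<bullet> z = t * (a i0 l \<bullet> z))"
proof -
  define U where "U c = (\<Sum>l\<in>UNIV. c$l *\<^sub>R a i0 l)" for c :: "real^'c"
  define V where "V i c = (\<Sum>l\<in>UNIV. c$l *\<^sub>R a i l)" for i and c :: "real^'c"
  have linU: "linear U" unfolding U_def by (rule lin_comb)
  have linV: "linear (V i)" for i unfolding V_def by (rule lin_comb)
  have Uax: "U (axis l 1) = a i0 l" for l unfolding U_def by (rule sum_axis)
  have "range (a i0) \<subseteq> range U" using Uax by (metis image_subsetI rangeI)
  moreover have "subspace (range U)" using linU by (simp add: linear_subspace_image subspace_UNIV)
  ultimately have "span (range (a i0)) \<subseteq> range U" by (simp add: span_minimal)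
  hence surjU: "surj U" using sp by blast
  obtain R where linR: "linear R" and UR: "U \<circ> R = id"
    using linear_surjective_right_inverse[OF linU surjU] by blast
  have URx: "U (R x) = x" for x using UR by (metis comp_apply id_apply)
  have ker: "V i d = 0" if "U d = 0" for i d
  proof -
    have "a i0 j \<bullet> (S *v V i d) = 0" for j
    proof -
      have "a i0 j \<bullet> (S *v V i d) = V i d \<bullet> (S *v a i0 j)" by (rule symS)
      also have "\<dots> = (\<Sum>l\<in>UNIV. d$l * (a i l \<bullet> (S *v a i0 j)))"
        unfolding V_def by (simp add: inner_sum_left)
      also have "\<dots> = (\<Sum>l\<in>UNIV. d$l * (a i j \<bullet> (S *v a i0 l)))"
        using H by metis
      also have "\<dots> = a i j \<bullet> (S *v U d)"
        unfolding U_def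
        by (simp add: linear_sum[OF matrix_vector_mul_linear] matrix_vector_mult_scaleR inner_sum_right)
      finally show ?thesis using that by simp
    qed
    hence "S *v V i d = 0" using perp0[OF sp] by blast
    hence "V i d \<bullet> (S *v V i d) = 0" by simp
    thus ?thesis using pd by (metis less_irrefl)
  qed
  define T where "T i x = V i (R x)" for i x
  have TU: "T i (U c) = V i c" for i c
  proof -
    have "U (R (U c) - c) = 0" using linU URx by (simp add: linear_diff)
    hence "V i (R (U c) - c) = 0" by (rule ker)
    thus ?thesis unfolding T_def using linV by (simp add: linear_diff)
  qed
  have linT: "linear (T i)" for i unfolding T_def
    using linear_compose[OF linR linV] by (simp add: o_def)
  have sa: "T i x \<bullet> (S *v y) = x \<bullet> (S *v T i y)" for i x y
  proof -
    obtain c e where xy: "x = U c" "y = U e" using URx by metis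
    show ?thesis unfolding xy TU unfolding U_def V_def bil_sum
      apply (rule sum.cong[OF refl])+
      using H symS by metis
  qed
  have comm: "T i (T i' x) = T i' (T i x)" for i i' x
  proof -
    have "(T i (T i' x) - T i' (T i x)) \<bullet> (S *v y) = 0" for y
    proof -
      obtain c e where xy: "x = U c" "y = U e" using URx by metis
      have "T i (T i' x) \<bullet> (S *v y) = T i' x \<bullet> (S *v T i y)" by (rule sa)
      also have "\<dots> = (\<Sum>l\<in>UNIV. \<Sum>l'\<in>UNIV. c$l * e$l' * (a i' l \<bullet> (S *v a i l')))"
        unfolding xy TU V_def bil_sum ..
      also have "\<dots> = (\<Sum>l\<in>UNIV. \<Sum>l'\<in>UNIV. c$l * e$l' * (a i l \<bullet> (S *v a i' l')))"
        apply (rule sum.cong[OF refl])+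
        using H symS by metis
      also have "\<dots> = T i x \<bullet> (S *v T i' y)"
        unfolding xy TU V_def bil_sum ..
      also have "\<dots> = T i' (T i x) \<bullet> (S *v y)" by (rule sa[symmetric])
      finally show ?thesis by (simp add: inner_diff_left)
    qed
    hence "S *v (T i (T i' x) - T i' (T i x)) = 0"
      by (metis inner_eq_zero_iff symS)
    hence "(T i (T i' x) - T i' (T i x)) \<bullet> (S *v (T i (T i' x) - T i' (T i x))) = 0" by simp
    thus ?thesis using pd by (metis less_irrefl eq_iff_diff_eq_0)
  qed
  have "\<exists>y\<in>UNIV. y \<noteq> 0 \<and> (\<forall>T'\<in>range T. \<exists>c. T' y = c *\<^sub>R y)"
    apply (rule eigF[OF symS pd, of "range T" UNIV "axis 1 1"])
    using linT sa comm by (auto simp: axis_eq_0_iff)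
  then obtain y where y0: "y \<noteq> 0" and ye: "\<And>i. \<exists>c. T i y = c *\<^sub>R y" by blast
  show ?thesis
  proof (rule exI[of _ "S *v y"], intro conjI allI)
    show "S *v y \<noteq> 0" using pd[OF y0] by auto
    fix i
    obtain c where c: "T i y = c *\<^sub>R y" using ye by blast
    show "\<exists>t. \<forall>l. a i l \<bullet> (S *v y) = t * (a i0 l \<bullet> (S *v y))"
    proof (intro exI allI)
      fix l
      have "a i l = T i (a i0 l)" using TU[of i "axis l 1"] Uax unfolding V_def sum_axis by simp
      hence "a i l \<bullet> (S *v y) = a i0 l \<bullet> (S *v T i y)" using sa by simp
      thus "a i l \<bullet> (S *v y) = c * (a i0 l \<bullet> (S *v y))" using c by (simp add: matrix_vector_mult_scaleR)
    qed
  qed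
qed



lemma rank_one_rows:
  fixes X :: "real^'n^'m"
  assumes r0: "X$i0 \<noteq> 0" and pr: "\<And>i. \<exists>t. X$i = t *\<^sub>R X$i0"
  shows "rank X = 1"
proof -
  have rw: "row i X = X$i" for i by (simp add: row_def vec_eq_iff)
  have "rows X \<subseteq> span {X$i0}"
    unfolding rows_def rw
  proof clarify
    fix i obtain t where "X$i = t *\<^sub>R X$i0" using pr by blast
    thus "X$i \<in> span {X$i0}" by (simp add: span_mul span_base)
  qed
  moreover have "X$i0 \<in> rows X" unfolding rows_def rw by blast
  ultimately have "span (rows X) = span {X$i0}"
    unfolding span_eq by (simp add: span_base)
  hence "dim (rows X) = dim {X$i0}" by (metis dim_span)
  thus ?thesis using r0 by (simp add: row_rank_def dim_singleton)
qed

definition outer :: "real^'k \<Rightarrow> real^'k \<Rightarrow> real^'k^'k" where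
  "outer u v = (\<chi> i j. u$i * v$j)"

lemma inner_outer: "M \<bullet> outer u v = u \<bullet> (M *v v)"
  unfolding inner_vec_def outer_def matrix_vector_mult_def inner_real_def
  by (simp add: sum_distrib_left mult.commute mult.left_commute)

lemma transpose_outer: "transpose (outer u v) = outer v u"
  by (simp add: transpose_def outer_def vec_eq_iff mult.commute)

lemma outer_mult: "outer u v *v z = (v \<bullet> z) *\<^sub>R u"
  unfolding vec_eq_iff outer_def matrix_vector_mult_def inner_vec_def inner_real_def
  by (simp add: sum_distrib_left sum_distrib_right mult.commute mult.left_commute)

lemma quad_transpose: "z \<bullet> (transpose M *v z) = z \<bullet> (M *v (z::real^'k))"
  by (metis dot_lmul_matrix inner_commute vector_transpose_matrix)

lemma cont_outer: "continuous_on S (\<lambda>z::real^'k. outer z z)"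
  unfolding outer_def by (intro continuous_intros)



theorem lemma7:
  fixes K :: "(real^'n::{finite,linorder}^'m::{finite,linorder}) set"
    and a :: "'m \<Rightarrow> 'n \<Rightarrow> real^3"
  assumes "subspace K" and "dim K = 3"
    and "\<not> has_rank1_connections K"
    and "K = range (PK a)" and "inj (PK a)"
    and "(\<exists>i0. dim (span (range (\<lambda>l. a i0 l))) = 3) \<or>
         (\<exists>j0. dim (span (range (\<lambda>l. a l j0))) = 3)"
  shows "\<exists>\<beta> :: ('m \<times> 'm \<times> 'n \<times> 'n) \<Rightarrow> real.
           (\<exists>k\<in>minor_idx. \<beta> k \<noteq> 0) \<and>
           (\<forall>X\<in>K. (\<Sum>k\<in>minor_idx. \<beta> k * minor2 k X) \<ge> 0) \<and>
           (\<exists>X\<in>K. (\<Sum>k\<in>minor_idx. \<beta> k * minor2 k X) \<noteq> 0)"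
proof (rule ccontr)
  assume nt: "\<not> ?thesis"
  define Q where "Q k = (case k of (i1, i2, j1, j2) \<Rightarrow>
      outer (a i1 j1) (a i2 j2) - outer (a i1 j2) (a i2 j1))" for k :: "'m \<times> 'm \<times> 'n \<times> 'n"
  define Qs where "Qs k = (1/2) *\<^sub>R (Q k + transpose (Q k))" for k
  have minorQ: "Qs k \<bullet> outer z z = minor2 k (PK a z)" for k z
  proof -
    have "Qs k \<bullet> outer z z = z \<bullet> (Q k *v z)"
      unfolding Qs_def inner_outer
      by (simp add: scaleR_matrix_vector_assoc[symmetric] matrix_vector_mult_add_rdistrib inner_add_right quad_transpose)
        (simp add: inner_commute[of z] dot_lmul_matrix)
    also have "\<dots> = minor2 k (PK a z)"
      unfolding Q_def minor2_def PK_def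
      by (cases k) (simp add: matrix_vector_mult_diff_rdistrib outer_mult inner_diff_right inner_commute)
    finally show ?thesis .
  qed
  define V where "V = range (\<lambda>\<beta>. \<Sum>k\<in>minor_idx. \<beta> k *\<^sub>R Qs k)"
  have subV: "subspace V" unfolding subspace_def V_def
  proof (intro conjI ballI allI)
    show "0 \<in> range (\<lambda>\<beta>. \<Sum>k\<in>minor_idx. \<beta> k *\<^sub>R Qs k)"
      by (rule range_eqI[of _ _ "\<lambda>_. 0"]) simp
    fix x y assume "x \<in> range (\<lambda>\<beta>. \<Sum>k\<in>minor_idx. \<beta> k *\<^sub>R Qs k)"
      "y \<in> range (\<lambda>\<beta>. \<Sum>k\<in>minor_idx. \<beta> k *\<^sub>R Qs k)"
    then obtain \<beta> \<gamma> where "x = (\<Sum>k\<in>minor_idx. \<beta> k *\<^sub>R Qs k)" "y = (\<Sum>k\<in>minor_idx. \<gamma> k *\<^sub>R Qs k)"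
      by blast
    thus "x + y \<in> range (\<lambda>\<beta>. \<Sum>k\<in>minor_idx. \<beta> k *\<^sub>R Qs k)"
      by (intro range_eqI[of _ _ "\<lambda>k. \<beta> k + \<gamma> k"]) (simp add: sum.distrib scaleR_add_left)
  next
    fix c x assume "x \<in> range (\<lambda>\<beta>. \<Sum>k\<in>minor_idx. \<beta> k *\<^sub>R Qs k)"
    then obtain \<beta> where "x = (\<Sum>k\<in>minor_idx. \<beta> k *\<^sub>R Qs k)" by blast
    thus "c *\<^sub>R x \<in> range (\<lambda>\<beta>. \<Sum>k\<in>minor_idx. \<beta> k *\<^sub>R Qs k)"
      by (intro range_eqI[of _ _ "\<lambda>k. c * \<beta> k"]) (simp add: scaleR_sum_right)
  qed
  define D where "D = (\<lambda>z::real^3. outer z z) ` sphere 0 1"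
  define C where "C = convex hull D"
  have cD: "compact D" unfolding D_def by (intro compact_continuous_image cont_outer compact_sphere)
  have cC: "compact C" unfolding C_def by (rule compact_convex_hull[OF cD])
  have neC: "C \<noteq> {}" unfolding C_def D_def convex_hull_eq_empty
    using norm_axis_1[of "1::3"] by (auto simp: image_is_empty)
  define G where "G = {M::real^3^3. (\<forall>z. 0 \<le> M \<bullet> outer z z) \<and> (\<Sum>i\<in>UNIV. M$i$i) = 1}"
  have convG: "convex G" unfolding G_def convex_def
  proof (intro ballI allI impI)
    fix x y :: "real^3^3" and u v :: real
    assume x: "x \<in> {M. (\<forall>z. 0 \<le> M \<bullet> outer z z) \<and> (\<Sum>i\<in>UNIV. M $ i $ i) = 1}"
      and y: "y \<in> {M. (\<forall>z. 0 \<le> M \<bullet> outer z z) \<and> (\<Sum>i\<in>UNIV. M $ i $ i) = 1}"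
      and uv: "0 \<le> u" "0 \<le> v" "u + v = 1"
    have "0 \<le> (u *\<^sub>R x + v *\<^sub>R y) \<bullet> outer z z" for z
      using x y uv by (simp add: inner_add_left)
    moreover have "(\<Sum>i\<in>UNIV. (u *\<^sub>R x + v *\<^sub>R y) $ i $ i) = u * (\<Sum>i\<in>UNIV. x $ i $ i) + v * (\<Sum>i\<in>UNIV. y $ i $ i)"
      by (simp add: sum.distrib sum_distrib_left)
    ultimately show "u *\<^sub>R x + v *\<^sub>R y \<in> {M. (\<forall>z. 0 \<le> M \<bullet> outer z z) \<and> (\<Sum>i\<in>UNIV. M $ i $ i) = 1}"
      using x y uv by simp
  qed
  have DG: "D \<subseteq> G" unfolding D_def G_def
  proof (rule image_subsetI, rule CollectI, rule conjI)
    fix z :: "real^3" assume "z \<in> sphere 0 1"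
    hence zz: "z \<bullet> z = 1" by (simp add: dot_square_norm)
    show "\<forall>w. 0 \<le> outer z z \<bullet> outer w w"
      by (simp add: inner_outer outer_mult) (metis inner_commute zero_le_square)
    have "(\<Sum>i\<in>UNIV. outer z z $ i $ i) = z \<bullet> z"
      by (simp add: outer_def inner_vec_def inner_real_def)
    thus "(\<Sum>i\<in>UNIV. outer z z $ i $ i) = 1" using zz by simp
  qed
  have CG: "C \<subseteq> G" unfolding C_def by (rule hull_minimal[of D G convex, OF DG convG])
  have disj: "V \<inter> C = {}"
  proof (rule ccontr)
    assume "V \<inter> C \<noteq> {}"
    then obtain M where "M \<in> V" "M \<in> G" using CG by blast
    then obtain \<beta> where M: "M = (\<Sum>k\<in>minor_idx. \<beta> k *\<^sub>R Qs k)" unfolding V_def by blast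
    have qf: "(\<Sum>k\<in>minor_idx. \<beta> k * minor2 k (PK a z)) = M \<bullet> outer z z" for z
      unfolding M by (simp add: inner_sum_left minorQ)
    have "(\<Sum>i\<in>UNIV. M$i$i) = 1" using \<open>M \<in> G\<close> unfolding G_def by blast
    then obtain i where "M$i$i \<noteq> 0" by (metis (mono_tags, lifting) sum.neutral zero_neq_one)
    moreover have "M$i$i = M \<bullet> outer (axis i 1) (axis i 1)"
    proof -
      have "M \<bullet> outer (axis i 1) (axis i 1) = (M *v axis i 1) \<bullet> axis i 1"
        by (simp add: inner_outer inner_commute)
      also have "\<dots> = (column i M) $ i" by (simp add: matrix_vector_mult_basis cart_eq_inner_axis)
      finally show ?thesis by (simp add: column_def)
    qed
    ultimately have nz: "(\<Sum>k\<in>minor_idx. \<beta> k * minor2 k (PK a (axis i 1))) \<noteq> 0" using qf by simp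
    have "\<exists>k\<in>minor_idx. \<beta> k \<noteq> 0"
    proof (rule ccontr)
      assume "\<not> ?thesis"
      hence "(\<Sum>k\<in>minor_idx. \<beta> k * minor2 k (PK a (axis i 1))) = 0" by simp
      thus False using nz by simp
    qed
    moreover have "\<forall>X\<in>K. (\<Sum>k\<in>minor_idx. \<beta> k * minor2 k X) \<ge> 0"
      using \<open>M \<in> G\<close> unfolding assms(4) G_def by (auto simp: qf)
    moreover have "\<exists>X\<in>K. (\<Sum>k\<in>minor_idx. \<beta> k * minor2 k X) \<noteq> 0"
      using nz unfolding assms(4) by blast
    ultimately show False using nt by blast
  qed
  obtain A b where AV: "\<And>x. x \<in> V \<Longrightarrow> A \<bullet> x < b" and AC: "\<And>x. x \<in> C \<Longrightarrow> A \<bullet> x > b"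
    using separating_hyperplane_closed_compact[OF subspace_imp_convex[OF subV] closed_subspace[OF subV]
        convex_convex_hull[of D, folded C_def] cC neC disj] by blast
  have b0: "b > 0" using AV[of 0] subspace_0[OF subV] by simp
  have AV0: "A \<bullet> x = 0" if "x \<in> V" for x
  proof (rule ccontr)
    assume nz: "A \<bullet> x \<noteq> 0"
    have "(b / (A \<bullet> x)) *\<^sub>R x \<in> V" using subspace_scale[OF subV that] .
    from AV[OF this] nz show False by simp
  qed
  have QsV: "Qs k \<in> V" if "k \<in> minor_idx" for k
  proof -
    have "(\<Sum>k'\<in>minor_idx. (if k' = k then 1 else 0) *\<^sub>R Qs k') = Qs k"
    proof -
      have "(if k' = k then 1 else 0) *\<^sub>R Qs k' = (if k' = k then Qs k else 0)" for k' by simp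
      hence "(\<Sum>k'\<in>minor_idx. (if k' = k then 1 else 0) *\<^sub>R Qs k') = (\<Sum>k'\<in>minor_idx. (if k' = k then Qs k else 0))"
        by (rule sum.cong[OF refl])
      also have "\<dots> = Qs k" using that by (simp add: sum.delta)
      finally show ?thesis .
    qed
    thus ?thesis unfolding V_def
      by (intro range_eqI[where x="\<lambda>k'. if k' = k then 1 else 0"]) simp
  qed
  have posA: "z \<bullet> (A *v z) > 0" if "z \<noteq> 0" for z
  proof -
    define c where "c = 1 / norm z"
    define u where "u = c *\<^sub>R z"
    have c0: "c > 0" using that by (simp add: c_def)
    have "norm u = 1" using that by (simp add: u_def c_def)
    hence "outer u u \<in> C" unfolding C_def D_def
      by (intro hull_inc imageI) simp
    hence "A \<bullet> outer u u > b" using AC by blast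
    hence "u \<bullet> (A *v u) > 0" using b0 by (simp add: inner_outer)
    moreover have "u \<bullet> (A *v u) = (c * c) * (z \<bullet> (A *v z))"
      unfolding u_def by (simp add: matrix_vector_mult_scaleR)
    ultimately have "0 < (c * c) * (z \<bullet> (A *v z))" by simp
    moreover have "c * c > 0" using c0 by simp
    ultimately show ?thesis by (simp add: zero_less_mult_iff)
  qed
  have transpose_diff: "transpose (M - N) = transpose M - transpose N" for M N :: "real^3^3"
    by (simp add: transpose_def vec_eq_iff)
  define S where "S = A + transpose A"
  have Sform: "x \<bullet> (S *v y) = x \<bullet> (A *v y) + y \<bullet> (A *v x)" for x y
    unfolding S_def
    by (simp add: matrix_vector_mult_add_rdistrib inner_add_right)
       (metis dot_lmul_matrix inner_commute vector_transpose_matrix)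
  have symS: "x \<bullet> (S *v y) = y \<bullet> (S *v x)" for x y using Sform by simp
  have pd: "x \<bullet> (S *v x) > 0" if "x \<noteq> 0" for x using Sform posA[OF that] by simp
  have Hk: "a i1 j1 \<bullet> (S *v a i2 j2) = a i1 j2 \<bullet> (S *v a i2 j1)" if "i1 < i2" "j1 < j2" for i1 i2 j1 j2
  proof -
    have "(i1, i2, j1, j2) \<in> minor_idx" using that by (simp add: minor_idx_def)
    hence "A \<bullet> Qs (i1, i2, j1, j2) = 0" using AV0 QsV by blast
    hence "(1/2) * (A \<bullet> Q (i1, i2, j1, j2) + A \<bullet> transpose (Q (i1, i2, j1, j2))) = 0"
      unfolding Qs_def by (simp only: inner_scaleR_right inner_add_right)
    hence e: "A \<bullet> Q (i1, i2, j1, j2) + A \<bullet> transpose (Q (i1, i2, j1, j2)) = 0" by simp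
    have q1: "A \<bullet> Q (i1, i2, j1, j2) = a i1 j1 \<bullet> (A *v a i2 j2) - a i1 j2 \<bullet> (A *v a i2 j1)"
      unfolding Q_def by (simp only: prod.case inner_diff_right inner_outer)
    have q2: "A \<bullet> transpose (Q (i1, i2, j1, j2)) = a i2 j2 \<bullet> (A *v a i1 j1) - a i2 j1 \<bullet> (A *v a i1 j2)"
      unfolding Q_def by (simp only: prod.case transpose_diff transpose_outer inner_diff_right inner_outer)
    show ?thesis unfolding Sform using e q1 q2 by linarith
  qed
  have H: "a i j \<bullet> (S *v a i' l) = a i l \<bullet> (S *v a i' j)" for i i' j l
  proof -
    have s1: "a i j \<bullet> (S *v a i' l) = a i' l \<bullet> (S *v a i j)" by (rule symS)
    have s2: "a i l \<bullet> (S *v a i' j) = a i' j \<bullet> (S *v a i l)" by (rule symS)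
    show ?thesis
    proof (cases i i' rule: linorder_cases)
      case less
      show ?thesis
      proof (cases j l rule: linorder_cases)
        case less thus ?thesis using Hk \<open>i < i'\<close> by blast
      next
        case equal thus ?thesis by simp
      next
        case greater thus ?thesis using Hk[of i i' l j] \<open>i < i'\<close> by simp
      qed
    next
      case equal thus ?thesis using symS[of "a i j" "a i l"] by simp
    next
      case greater
      show ?thesis
      proof (cases j l rule: linorder_cases)
        case less thus ?thesis using Hk[of i' i j l] greater s1 s2 by simp
      next
        case equal thus ?thesis by simp
      next
        case greater thus ?thesis using Hk[of i' i l j] \<open>i' < i\<close> s1 s2 by simp
      qed
    qed
  qed
  have norank1: "rank X \<noteq> 1" if "X \<in> K" "X \<noteq> 0" for X
  proof
    assume r1: "rank X = 1"
    have z: "0 \<in> K" using assms(1) by (rule subspace_0)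
    have "X \<noteq> 0 \<and> rank (X - 0) = 1" using r1 that by simp
    hence "has_rank1_connections K" unfolding has_rank1_connections_def using that(1) z by blast
    thus False using assms(3) by blast
  qed
  have PK: "PK a z $ i $ j = a i j \<bullet> z" for z i j by (simp add: PK_def)
  from assms(6) show False
  proof (elim disjE exE)
    fix i0 assume "dim (span (range (\<lambda>l. a i0 l))) = 3"
    hence sp: "span (range (a i0)) = UNIV" using dim_eq_full[of "range (a i0)"] by (simp add: dim_span)
    obtain z where z0: "z \<noteq> 0" and zt: "\<And>i. \<exists>t. \<forall>l. a i l \<bullet> z = t * (a i0 l \<bullet> z)"
      using core[of S a i0, OF symS pd H sp] by blast
    define X where "X = PK a z"
    have r0: "X $ i0 \<noteq> 0"
    proof
      assume x0: "X $ i0 = 0"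
      have "a i0 l \<bullet> z = 0" for l
      proof -
        have "X $ i0 $ l = 0" using x0 by simp
        thus ?thesis by (simp add: X_def PK)
      qed
      thus False using perp0[OF sp] z0 by blast
    qed
    have "rank X = 1"
    proof (rule rank_one_rows[OF r0])
      fix i obtain t where t: "\<forall>l. a i l \<bullet> z = t * (a i0 l \<bullet> z)" using zt by blast
      show "\<exists>t. X $ i = t *\<^sub>R X $ i0"
        by (rule exI[of _ t]) (simp add: vec_eq_iff X_def PK t)
    qed
    moreover have "X \<in> K" unfolding X_def assms(4) by (rule rangeI)
    moreover have "X \<noteq> 0" using r0 by auto
    ultimately show False using norank1 by blast
  next
    fix j0 assume "dim (span (range (\<lambda>l. a l j0))) = 3"
    hence sp: "span (range (\<lambda>l. a l j0)) = UNIV" using dim_eq_full[of "range (\<lambda>l. a l j0)"] by (simp add: dim_span)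
    have H': "a i j \<bullet> (S *v a l j') = a l j \<bullet> (S *v a i j')" for i l j j'
      using H[of i j l j'] symS[of "a i j'" "a l j"] by linarith
    obtain z where z0: "z \<noteq> 0" and zt: "\<And>j. \<exists>t. \<forall>i. a i j \<bullet> z = t * (a i j0 \<bullet> z)"
      using core[of S "\<lambda>j i. a i j" j0, OF symS pd H' sp] by blast
    define X where "X = transpose (PK a z)"
    have Xe: "X $ j $ i = a i j \<bullet> z" for i j by (simp add: X_def transpose_def PK)
    have r0: "X $ j0 \<noteq> 0"
    proof
      assume x0: "X $ j0 = 0"
      have "a l j0 \<bullet> z = 0" for l
      proof -
        have "X $ j0 $ l = 0" using x0 by simp
        thus ?thesis by (simp add: Xe)
      qed
      thus False using perp0[OF sp] z0 by blast
    qed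
    have "rank X = 1"
    proof (rule rank_one_rows[OF r0])
      fix j obtain t where t: "\<forall>i. a i j \<bullet> z = t * (a i j0 \<bullet> z)" using zt by blast
      show "\<exists>t. X $ j = t *\<^sub>R X $ j0"
        by (rule exI[of _ t]) (simp add: vec_eq_iff Xe t)
    qed
    hence "rank (PK a z) = 1" unfolding X_def by (simp add: rank_transpose)
    moreover have "PK a z \<in> K" unfolding assms(4) by (rule rangeI)
    moreover have "PK a z \<noteq> 0" using r0 unfolding X_def by (auto simp: transpose_def vec_eq_iff)
    ultimately show False using norank1 by blast
  qed
qed

end
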